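(* Let $n\ge1$ and $\beta\ge2(n+2)$. For every $l=(l_j)_{j\ge1}\in\mathbb{Z}^\infty$ with finitely many nonzero entries and $1\le|l|\le2$, $$\ln(1+\langle l\rangle)\ge\frac18\,\|l\|_{2\beta}^{\frac1{2\beta}}\,\|l\|_{-2\beta}^{\frac1{2\beta}},$$ where $\|l\|_{\pm2\beta}=\sup_{j\ge1}|l_j|(1+\ln j)^{\pm2\beta}$.
   Context: $|l|=\sum_j|l_j|$ and $\langle l\rangle=\max\{1,|\sum_{j\ge1}jl_j|\}$. *)

theory Defs
  imports Complex_Main
begin

text \<open>Sequences l = (l_j)_{j>=1} in Z^infinity are modelled as functions nat => int;
  only the indices j >= 1 are used (the value at 0 is ignored).\<close>

definition supp1 :: "(nat \<Rightarrow> int) \<Rightarrow> nat set" where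
  "supp1 l = {j. 1 \<le> j \<and> l j \<noteq> 0}"

definition abs_l :: "(nat \<Rightarrow> int) \<Rightarrow> int" where
  "abs_l l = (\<Sum>j\<in>supp1 l. \<bar>l j\<bar>)"

definition bracket_l :: "(nat \<Rightarrow> int) \<Rightarrow> int" where
  "bracket_l l = max 1 \<bar>\<Sum>j\<in>supp1 l. int j * l j\<bar>"

definition wnorm :: "real \<Rightarrow> (nat \<Rightarrow> int) \<Rightarrow> real" where
  "wnorm p l = (SUP j\<in>{1..}. real_of_int \<bar>l j\<bar> * (1 + ln (real j)) powr p)"

end

theory Submission
  imports Defs
begin

lemma ln2_ge: "ln (2::real) \<ge> 1/2"
proof -
  have "exp (1/2::real) \<le> 2" using exp_bound_half[of "1/2::real"] by simp
  then have "ln (exp (1/2::real)) \<le> ln 2" by (subst ln_le_cancel_iff) auto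
  then show ?thesis by simp
qed

theorem lemma6p2:
  fixes n :: nat and \<beta> :: real and l :: "nat \<Rightarrow> int"
  assumes "n \<ge> 1"
    and "\<beta> \<ge> 2 * (real n + 2)"
    and "finite (supp1 l)"
    and "1 \<le> abs_l l" and "abs_l l \<le> 2"
  shows "ln (1 + real_of_int (bracket_l l))
           \<ge> 1/8 * wnorm (2*\<beta>) l powr (1/(2*\<beta>)) * wnorm (-(2*\<beta>)) l powr (1/(2*\<beta>))"
proof -
  define S where "S = supp1 l"
  have fin: "finite S" using assms(3) S_def by simp
  have Sne: "S \<noteq> {}" using assms(4) unfolding abs_l_def S_def[symmetric] by auto
  have Sge1: "\<And>j. j \<in> S \<Longrightarrow> 1 \<le> j" and Snz: "\<And>j. j \<in> S \<Longrightarrow> l j \<noteq> 0"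
    by (auto simp: S_def supp1_def)
  have notS: "\<And>j. 1 \<le> j \<Longrightarrow> j \<notin> S \<Longrightarrow> l j = 0" by (auto simp: S_def supp1_def)
  have absS: "(\<Sum>j\<in>S. \<bar>l j\<bar>) \<le> 2" using assms(5) by (simp add: abs_l_def S_def)
  have lj2: "\<And>j. j \<in> S \<Longrightarrow> \<bar>l j\<bar> \<le> 2"
  proof -
    fix j assume "j \<in> S"
    then have "\<bar>l j\<bar> \<le> (\<Sum>j\<in>S. \<bar>l j\<bar>)" using fin by (intro member_le_sum) auto
    then show "\<bar>l j\<bar> \<le> 2" using absS by simp
  qed
  have "int (card S) = (\<Sum>j\<in>S. 1::int)" by simp
  also have "\<dots> \<le> (\<Sum>j\<in>S. \<bar>l j\<bar>)"
  proof (rule sum_mono)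
    fix j assume "j \<in> S" then have "l j \<noteq> 0" by (rule Snz) then show "1 \<le> \<bar>l j\<bar>" by linarith
  qed
  finally have cardS: "card S \<le> 2" using absS by simp
  define jmin where "jmin = Min S"
  define jmax where "jmax = Max S"
  have jmin_in: "jmin \<in> S" and jmax_in: "jmax \<in> S" using fin Sne by (auto simp: jmin_def jmax_def)
  have jmin_le: "\<And>j. j \<in> S \<Longrightarrow> jmin \<le> j" and jmax_ge: "\<And>j. j \<in> S \<Longrightarrow> j \<le> jmax"
    using fin by (auto simp: jmin_def jmax_def)
  have jmin1: "1 \<le> jmin" using Sge1 jmin_in by auto
  have jmm: "jmin \<le> jmax" using jmin_le jmax_in by auto
  define d where "d = jmax - jmin"
  have brk: "int d \<le> \<bar>\<Sum>j\<in>S. int j * l j\<bar>"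
  proof (cases "card S = 1")
    case True
    then obtain x where "S = {x}" using card_1_singletonE by blast
    then have "jmax = jmin" using jmin_in jmax_in by auto
    then show ?thesis by (simp add: d_def)
  next
    case False
    have "card S \<noteq> 0" using Sne fin by simp
    then have "card S = 2" using cardS False by linarith
    then obtain i j where ij: "S = {i, j}" "i \<noteq> j" by (meson card_2_iff)
    have ss: "(\<Sum>j\<in>S. \<bar>l j\<bar>) = \<bar>l i\<bar> + \<bar>l j\<bar>" using ij by simp
    have "l i \<noteq> 0" "l j \<noteq> 0" using Snz ij by auto
    then have si: "l i = 1 \<or> l i = -1" and sj: "l j = 1 \<or> l j = -1" using absS ss by linarith+
    have "jmax = max i j" "jmin = min i j" using ij by (auto simp: jmax_def jmin_def)
    then have "int d = \<bar>int i - int j\<bar>" using d_def by auto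
    moreover have "\<bar>int i - int j\<bar> \<le> \<bar>int i * l i + int j * l j\<bar>"
      using si sj by (elim disjE) (simp_all add: abs_if)
    ultimately show ?thesis using ij by simp
  qed
  define m where "m = max 1 (real d)"
  have m1: "1 \<le> m" by (simp add: m_def)
  have bm: "m \<le> real_of_int (bracket_l l)"
  proof -
    have "real d \<le> real_of_int (bracket_l l)"
      using brk unfolding bracket_l_def S_def[symmetric] by linarith
    moreover have "1 \<le> real_of_int (bracket_l l)" unfolding bracket_l_def by simp
    ultimately show ?thesis by (simp add: m_def)
  qed
  have lnb: "ln (1 + m) \<le> ln (1 + real_of_int (bracket_l l))" using bm m1 by simp
  have lnm: "1/2 \<le> ln (1 + m)"
  proof -
    have "ln 2 \<le> ln (1 + m)" using m1 by simp
    then show ?thesis using ln2_ge by linarith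
  qed
  have bpos: "\<beta> > 0" using assms(2) by simp
  define A where "A = 1 + ln (real jmax)"
  define B where "B = 1 + ln (real jmin)"
  have B1: "B \<ge> 1" using jmin1 by (simp add: B_def)
  have AB: "B \<le> A" using jmm jmin1 by (simp add: A_def B_def)
  define f where "f = (\<lambda>p j. real_of_int \<bar>l j\<bar> * (1 + ln (real j)) powr p)"
  have f_nonneg: "\<And>p j. 0 \<le> f p j" by (simp add: f_def)
  have fa: "\<And>j. j \<in> {1..} \<Longrightarrow> f (2*\<beta>) j \<le> 2 * A powr (2*\<beta>)"
  proof -
    fix j :: nat assume j: "j \<in> {1..}"
    show "f (2*\<beta>) j \<le> 2 * A powr (2*\<beta>)"
    proof (cases "j \<in> S")
      case True
      have "(1 + ln (real j)) powr (2*\<beta>) \<le> A powr (2*\<beta>)"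
        using j jmax_ge[OF True] bpos by (auto simp: A_def intro!: powr_mono2)
      moreover have "real_of_int \<bar>l j\<bar> \<le> 2" using lj2[OF True] by simp
      ultimately show ?thesis unfolding f_def
        by (intro mult_mono) auto
    next
      case False then show ?thesis using notS j by (simp add: f_def)
    qed
  qed
  have fb: "\<And>j. j \<in> {1..} \<Longrightarrow> f (-(2*\<beta>)) j \<le> 2 * B powr (-(2*\<beta>))"
  proof -
    fix j :: nat assume j: "j \<in> {1..}"
    show "f (-(2*\<beta>)) j \<le> 2 * B powr (-(2*\<beta>))"
    proof (cases "j \<in> S")
      case True
      have "B \<le> 1 + ln (real j)" using jmin_le[OF True] jmin1 by (simp add: B_def)
      then have "(1 + ln (real j)) powr (-(2*\<beta>)) \<le> B powr (-(2*\<beta>))"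
        using B1 bpos by (intro powr_mono2') auto
      moreover have "real_of_int \<bar>l j\<bar> \<le> 2" using lj2[OF True] by simp
      ultimately show ?thesis unfolding f_def
        by (intro mult_mono) auto
    next
      case False then show ?thesis using notS j by (simp add: f_def)
    qed
  qed
  have wa: "wnorm (2*\<beta>) l \<le> 2 * A powr (2*\<beta>)" and wa0: "0 \<le> wnorm (2*\<beta>) l"
  proof -
    have e: "wnorm (2*\<beta>) l = (SUP j\<in>{1..}. f (2*\<beta>) j)" by (simp add: wnorm_def f_def)
    show "wnorm (2*\<beta>) l \<le> 2 * A powr (2*\<beta>)" unfolding e by (rule cSUP_least) (use fa in auto)
    have "bdd_above (f (2*\<beta>) ` {1..})" using fa by (auto intro!: bdd_aboveI2)
    then have "f (2*\<beta>) 1 \<le> (SUP j\<in>{1..}. f (2*\<beta>) j)" by (intro cSUP_upper) auto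
    then show "0 \<le> wnorm (2*\<beta>) l" unfolding e using f_nonneg[of "2*\<beta>" 1] by linarith
  qed
  have wb: "wnorm (-(2*\<beta>)) l \<le> 2 * B powr (-(2*\<beta>))" and wb0: "0 \<le> wnorm (-(2*\<beta>)) l"
  proof -
    have e: "wnorm (-(2*\<beta>)) l = (SUP j\<in>{1..}. f (-(2*\<beta>)) j)" by (simp add: wnorm_def f_def)
    show "wnorm (-(2*\<beta>)) l \<le> 2 * B powr (-(2*\<beta>))" unfolding e by (rule cSUP_least) (use fb in auto)
    have "bdd_above (f (-(2*\<beta>)) ` {1..})" using fb by (auto intro!: bdd_aboveI2)
    then have "f (-(2*\<beta>)) 1 \<le> (SUP j\<in>{1..}. f (-(2*\<beta>)) j)" by (intro cSUP_upper) auto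
    then show "0 \<le> wnorm (-(2*\<beta>)) l" unfolding e using f_nonneg[of "-(2*\<beta>)" 1] by linarith
  qed
  define e where "e = 1/(2*\<beta>)"
  have epos: "0 < e" using bpos by (simp add: e_def)
  have A0: "0 < A" using AB B1 by simp
  have pa: "wnorm (2*\<beta>) l powr e \<le> 2 powr e * A"
  proof -
    have "wnorm (2*\<beta>) l powr e \<le> (2 * A powr (2*\<beta>)) powr e"
      using wa wa0 epos by (intro powr_mono2) auto
    also have "\<dots> = 2 powr e * (A powr (2*\<beta>)) powr e" by (simp add: powr_mult)
    also have "(A powr (2*\<beta>)) powr e = A" using bpos A0 by (simp add: powr_powr e_def)
    finally show ?thesis .
  qed
  have pb: "wnorm (-(2*\<beta>)) l powr e \<le> 2 powr e / B"
  proof -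
    have "wnorm (-(2*\<beta>)) l powr e \<le> (2 * B powr (-(2*\<beta>))) powr e"
      using wb wb0 epos by (intro powr_mono2) auto
    also have "\<dots> = 2 powr e * (B powr (-(2*\<beta>))) powr e" by (simp add: powr_mult)
    also have "(B powr (-(2*\<beta>))) powr e = B powr (-1)" using bpos B1 by (simp add: powr_powr e_def)
    also have "B powr (-1) = 1 / B" using B1 by (simp add: powr_minus_divide)
    finally show ?thesis by simp
  qed
  have two: "2 powr e * 2 powr e \<le> (2::real)"
  proof -
    have "2 powr e * 2 powr e = 2 powr (2*e)" by (simp add: powr_add[symmetric])
    also have "\<dots> \<le> 2 powr 1" using bpos assms(2) by (intro powr_mono) (auto simp: e_def)
    finally show ?thesis by simp
  qed
  have ratio: "A / B \<le> 1 + ln (1 + m)"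
  proof -
    have "real jmax \<le> real jmin * (1 + m)"
    proof -
      have "real jmax = real jmin + real d" using jmm by (simp add: d_def)
      also have "\<dots> \<le> real jmin + real jmin * m" using jmin1 m1
      proof (intro add_left_mono)
        have "real d \<le> m" by (simp add: m_def)
        also have "m \<le> real jmin * m" using mult_right_mono[of 1 "real jmin" m] jmin1 m1 by simp
        finally show "real d \<le> real jmin * m" .
      qed
      finally show ?thesis by (simp add: algebra_simps)
    qed
    then have "ln (real jmax) \<le> ln (real jmin * (1 + m))"
      using jmin1 m1 jmm by (subst ln_le_cancel_iff) auto
    also have "\<dots> = ln (real jmin) + ln (1 + m)" using jmin1 m1 by (simp add: ln_mult)
    finally have "ln (real jmax) \<le> ln (real jmin) + ln (1 + m)" .
    then have "A \<le> B + ln (1 + m)" by (simp add: A_def B_def)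
    also have "\<dots> \<le> B * (1 + ln (1 + m))" using B1 lnm by (simp add: algebra_simps)
    finally show ?thesis using B1 by (simp add: divide_simps mult.commute)
  qed
  have fin_ineq: "1/8 * wnorm (2*\<beta>) l powr e * wnorm (-(2*\<beta>)) l powr e \<le> 1/8 * (2 powr e * A) * (2 powr e / B)"
    using A0 by (intro mult_mono pa pb) auto
  also have "\<dots> = 1/8 * (2 powr e * 2 powr e) * (A / B)" by simp
  also have "\<dots> \<le> 1/8 * 2 * (1 + ln (1 + m))"
    using two ratio A0 B1 by (intro mult_mono) auto
  also have "\<dots> \<le> ln (1 + m)" using lnm by simp
  also have "\<dots> \<le> ln (1 + real_of_int (bracket_l l))" by (rule lnb)
  finally have "1/8 * wnorm (2*\<beta>) l powr e * wnorm (-(2*\<beta>)) l powr e \<le> ln (1 + real_of_int (bracket_l l))" .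
  then show ?thesis unfolding e_def .
qed

end
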